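(* Let $m,n\ge0$ be integers with $m+n\ge1$. Then the poset of nonempty faces of the nestohedron $P_{\mathcal B_{m,n}}$, ordered by inclusion, is anti-isomorphic to the poset $(\mathcal P_{(m,n)},\le)$ of $m$-lighted $n$-shades; that is, $P_{\mathcal B_{m,n}}$ is a polytope realization of the $(m,n)$-Hochschild polytope $\mathrm{Hoch}(m,n)$ (the abstract polytope whose face poset is anti-isomorphic to $(\mathcal P_{(m,n)},\le)$).
   Context: For integers $i\le j$, $[i,j]=\{\ell\in\mathbb Z: i\le\ell\le j\}$ and $[N]=[1,N]$. $\mathcal B_{m,n}$ is the collection of nonempty subsets $I\subseteq[m+n]$ such that whenever $|I|\ge2$, $I\cap[m+1,m+n]$ is either $\emptyset$ or $[m+r,m+n]$ for some $1\le r\le n$. The nestohedron of a building set $\mathcal B$ on $[N]$ is the Minkowski sum $P_{\mathcal B}=\sum_{I\in\mathcal B}\mathrm{conv}\{e_i:i\in I\}\subset\mathbb R^{N}$. An $m$-lighted $n$-shade is a finite sequence $\mathbf S=((s_1,c_1),\ldots,(s_\ell,c_\ell))$, $\ell\ge1$, where each $s_i$ is a (possibly empty) tuple of positive integers, the sum of all entries of all $s_1,\dots,s_\ell$ equals $n$, the $c_i$ are pairwise disjoint (possibly empty) subsets of $[m]$ with $c_1\cup\dots\cup c_\ell=[m]$, and for each $i$, $s_i$ and $c_i$ are not both empty. Write $\mathbf S'\to\mathbf S$ if either (a) for some $1\le i<\ell$, $\mathbf S'$ is obtained from $\mathbf S$ by replacing the two consecutive pairs $(s_i,c_i),(s_{i+1},c_{i+1})$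 by the single pair $(s_i s_{i+1},c_i\cup c_{i+1})$, where $s_is_{i+1}$ is the concatenation of the tuples; or (b) for some $i$ and some entry $s_i^r$ of $s_i=(s_i^1,\dots,s_i^p)$, $\mathbf S'$ is obtained from $\mathbf S$ by replacing $s_i$ with $(s_i^1,\dots,s_i^{r-1},a,b,s_i^{r+1},\dots,s_i^p)$ where $a,b$ are positive integers with $a+b=s_i^r$. The partial order $\le$ on the set $\mathcal P_{(m,n)}$ of all $m$-lighted $n$-shades is the reflexive–transitive closure of $\to$ (i.e. $\mathbf S'\le\mathbf S$ iff $\mathbf S'=\mathbf S$ or there is a sequence $\mathbf S'\to\mathbf S_1\to\cdots\to\mathbf S$). *)

theory Defs
  imports "HOL-Analysis.Analysis"
begin

definition building_set :: "nat \<Rightarrow> nat \<Rightarrow> nat set set" where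
  "building_set m n = {I. I \<noteq> {} \<and> I \<subseteq> {1..m+n} \<and>
     (card I \<ge> 2 \<longrightarrow>
        (I \<inter> {m+1..m+n} = {} \<or>
         (\<exists>r. 1 \<le> r \<and> r \<le> n \<and> I \<inter> {m+1..m+n} = {m+r..m+n})))}"

text \<open>Nestohedron: Minkowski sum over I in B of conv{e_i : i in I},
  where e i is the i-th standard basis vector.\<close>
definition nestohedron :: "('i \<Rightarrow> 'v::real_vector) \<Rightarrow> 'i set set \<Rightarrow> 'v set" where
  "nestohedron e B = {x. \<exists>p. (\<forall>I\<in>B. p I \<in> convex hull (e ` I)) \<and> x = (\<Sum>I\<in>B. p I)}"

text \<open>An m-lighted n-shade: list of pairs (s_i, c_i), s_i a tuple of positive integers,
  c_i a subset of [m].\<close>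
type_synonym shade = "(nat list \<times> nat set) list"

definition is_shade :: "nat \<Rightarrow> nat \<Rightarrow> shade \<Rightarrow> bool" where
  "is_shade m n S \<longleftrightarrow>
     S \<noteq> [] \<and>
     (\<forall>(s, c) \<in> set S. (\<forall>a \<in> set s. a > 0) \<and> c \<subseteq> {1..m} \<and> (s \<noteq> [] \<or> c \<noteq> {})) \<and>
     sum_list (map (\<lambda>(s, c). sum_list s) S) = n \<and>
     (\<forall>i j. i < j \<and> j < length S \<longrightarrow> snd (S ! i) \<inter> snd (S ! j) = {}) \<and>
     (\<Union>(s, c) \<in> set S. c) = {1..m}"

definition shades :: "nat \<Rightarrow> nat \<Rightarrow> shade set" where
  "shades m n = {S. is_shade m n S}"

inductive shade_step :: "shade \<Rightarrow> shade \<Rightarrow> bool" where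
  merge: "shade_step (xs @ [(s1 @ s2, c1 \<union> c2)] @ ys) (xs @ [(s1, c1), (s2, c2)] @ ys)"
| split: "0 < a \<Longrightarrow> 0 < b \<Longrightarrow>
          shade_step (xs @ [(us @ [a, b] @ vs, c)] @ ys) (xs @ [(us @ [a + b] @ vs, c)] @ ys)"

definition shade_le :: "shade \<Rightarrow> shade \<Rightarrow> bool" where
  "shade_le S' S \<longleftrightarrow> shade_step\<^sup>*\<^sup>* S' S"

end

theory Submission
  imports Defs
begin

definition amax :: "(nat \<Rightarrow> real) \<Rightarrow> nat set \<Rightarrow> nat set" where
  "amax w I = {i\<in>I. \<forall>j\<in>I. w j \<le> w i}"

definition mxI :: "(nat \<Rightarrow> real) \<Rightarrow> nat set \<Rightarrow> real" where
  "mxI w I = Max (w ` I)"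

definition wt :: "'a::real_inner \<Rightarrow> (nat \<Rightarrow> 'a) \<Rightarrow> nat \<Rightarrow> real" where
  "wt a e i = a \<bullet> e i"

definition Pf :: "(nat \<Rightarrow> 'a::real_inner) \<Rightarrow> nat set set \<Rightarrow> 'a \<Rightarrow> 'a set" where
  "Pf e B a = {x \<in> nestohedron e B. \<forall>y \<in> nestohedron e B. a \<bullet> y \<le> a \<bullet> x}"

lemma nest_eq_sum:
  assumes "finite B"
  shows "nestohedron e B = (\<Sum>I\<in>B. convex hull (e ` I))"
  unfolding nestohedron_def set_sum_alt[OF assms] by auto

lemma nest_polytope:
  fixes e :: "nat \<Rightarrow> 'a::euclidean_space"
  assumes "finite B" "\<forall>I\<in>B. finite I"
  shows "polytope (nestohedron e B)"
proof -
  have "nestohedron e B = convex hull (\<Sum>I\<in>B. e ` I)"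
    by (simp add: nest_eq_sum[OF assms(1)] convex_hull_set_sum)
  moreover have "finite (\<Sum>I\<in>B. e ` I)"
    using assms(2) by (intro finite_set_sum) auto
  ultimately show ?thesis unfolding polytope_def by blast
qed

lemma hull_le_mx:
  assumes "finite I" "p \<in> convex hull (e ` I)"
  shows "a \<bullet> p \<le> mxI (wt a e) I"
proof -
  have "e ` I \<subseteq> {x. a \<bullet> x \<le> mxI (wt a e) I}"
    using assms(1) by (auto simp: mxI_def wt_def)
  then have "convex hull (e ` I) \<subseteq> {x. a \<bullet> x \<le> mxI (wt a e) I}"
    by (intro hull_minimal) (auto simp: convex_halfspace_le)
  then show ?thesis using assms(2) by auto
qed

lemma hull_eq_mx:
  assumes "finite I" "p \<in> convex hull (e ` I)" "a \<bullet> p = mxI (wt a e) I"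
    and "amax (wt a e) I \<subseteq> amax (wt a' e) I"
  shows "a' \<bullet> p = mxI (wt a' e) I"
proof -
  let ?M = "mxI (wt a e) I" and ?M' = "mxI (wt a' e) I"
  have fin: "finite (e ` I)" using assms(1) by simp
  obtain u where u0: "\<forall>x\<in>e ` I. 0 \<le> u x" and u1: "sum u (e ` I) = 1"
    and up: "(\<Sum>x\<in>e ` I. u x *\<^sub>R x) = p"
    using assms(2) unfolding convex_hull_finite[OF fin] by blast
  have le: "a \<bullet> y \<le> ?M" if "y \<in> e ` I" for y
    using that assms(1) by (auto simp: mxI_def wt_def)
  have le': "a' \<bullet> y \<le> ?M'" if "y \<in> e ` I" for y
    using that assms(1) by (auto simp: mxI_def wt_def)
  have "a \<bullet> p = (\<Sum>x\<in>e ` I. u x * (a \<bullet> x))"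
    by (simp add: up[symmetric] inner_sum_right)
  moreover have "?M = (\<Sum>x\<in>e ` I. u x * ?M)"
    by (simp add: sum_distrib_right[symmetric] u1)
  ultimately have s0: "(\<Sum>x\<in>e ` I. u x * (?M - a \<bullet> x)) = 0"
    using assms(3) by (simp add: right_diff_distrib sum_subtractf)
  have nn: "\<And>x. x\<in>e ` I \<Longrightarrow> 0 \<le> u x * (?M - a \<bullet> x)"
  proof -
    fix x assume x: "x \<in> e ` I"
    have "0 \<le> u x" using u0 x by blast
    moreover have "0 \<le> ?M - a \<bullet> x" using le[OF x] by simp
    ultimately show "0 \<le> u x * (?M - a \<bullet> x)" by simp
  qed
  have z: "\<forall>x\<in>e ` I. u x * (?M - a \<bullet> x) = 0"
    using sum_nonneg_eq_0_iff[OF fin nn] s0 by simp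
  have key: "u x * (a' \<bullet> x) = u x * ?M'" if xI: "x \<in> e ` I" for x
  proof (cases "u x = 0")
    case False
    then have ax: "a \<bullet> x = ?M" using z xI by auto
    obtain i where i: "i \<in> I" "x = e i" using xI by auto
    have "i \<in> amax (wt a e) I"
      using i ax le by (auto simp: amax_def wt_def)
    then have "i \<in> amax (wt a' e) I" using assms(4) by auto
    then have "a' \<bullet> x \<ge> ?M'"
      using i assms(1) unfolding amax_def mxI_def wt_def
      by (subst Max_le_iff) auto
    then show ?thesis using le'[OF xI] by simp
  qed simp
  have "a' \<bullet> p = (\<Sum>x\<in>e ` I. u x * (a' \<bullet> x))"
    by (simp add: up[symmetric] inner_sum_right)
  also have "\<dots> = (\<Sum>x\<in>e ` I. u x * ?M')"
    using key by (rule sum.cong[OF refl])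
  also have "\<dots> = ?M'" by (simp add: sum_distrib_right[symmetric] u1)
  finally show ?thesis .
qed

locale nestset =
  fixes B :: "nat set set"
  assumes finB: "finite B" and finI: "\<And>I. I \<in> B \<Longrightarrow> finite I"
    and neI: "\<And>I. I \<in> B \<Longrightarrow> I \<noteq> {}"
begin

lemma amax_ne: "I \<in> B \<Longrightarrow> amax w I \<noteq> {}"
proof -
  assume I: "I \<in> B"
  have "Max (w ` I) \<in> w ` I" using Max_in[of "w ` I"] finI[OF I] neI[OF I] by auto
  then obtain i where "i \<in> I" "w i = Max (w ` I)" by auto
  then show ?thesis using finI[OF I] by (auto simp: amax_def)
qed

lemma amax_mx: "I \<in> B \<Longrightarrow> i \<in> amax w I \<Longrightarrow> w i = mxI w I"
  using finI by (auto simp: amax_def mxI_def intro!: antisym Max_ge) (subst Max_le_iff; auto)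

lemma nest_le: "x \<in> nestohedron e B \<Longrightarrow> a \<bullet> x \<le> (\<Sum>I\<in>B. mxI (wt a e) I)"
  unfolding nestohedron_def
  by (auto simp: inner_sum_right intro!: sum_mono hull_le_mx finI)

lemma nest_att: "\<exists>x \<in> nestohedron e B. a \<bullet> x = (\<Sum>I\<in>B. mxI (wt a e) I)"
proof -
  define p where "p I = e (SOME i. i \<in> amax (wt a e) I)" for I
  have pI: "p I \<in> convex hull (e ` I) \<and> a \<bullet> p I = mxI (wt a e) I" if "I \<in> B" for I
  proof -
    have "(SOME i. i \<in> amax (wt a e) I) \<in> amax (wt a e) I"
      using amax_ne[OF that] by (simp add: some_in_eq)
    then show ?thesis using amax_mx[OF that] unfolding p_def
      by (auto simp: amax_def wt_def intro: hull_inc)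
  qed
  show ?thesis
    by (rule bexI[of _ "sum p B"]) (use pI in \<open>auto simp: nestohedron_def inner_sum_right\<close>)
qed

lemma Pf_eq: "Pf e B a = {x \<in> nestohedron e B. a \<bullet> x = (\<Sum>I\<in>B. mxI (wt a e) I)}"
  using nest_le nest_att unfolding Pf_def by (smt (verit) Collect_cong)

lemma sum_eq_each:
  fixes f g :: "nat set \<Rightarrow> real"
  assumes "\<forall>I\<in>B. f I \<le> g I" "sum f B = sum g B"
  shows "\<forall>I\<in>B. f I = g I"
proof -
  have "sum (\<lambda>I. g I - f I) B = 0" using assms(2) by (simp add: sum_subtractf)
  moreover have "\<And>I. I \<in> B \<Longrightarrow> 0 \<le> g I - f I" using assms(1) by simp
  ultimately have "\<forall>I\<in>B. g I - f I = 0"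
    using sum_nonneg_eq_0_iff[OF finB, of "\<lambda>I. g I - f I"] by simp
  then show ?thesis by auto
qed

lemma Pf_decomp:
  assumes "\<forall>I\<in>B. p I \<in> convex hull (e ` I)" "sum p B \<in> Pf e B a"
  shows "\<forall>I\<in>B. a \<bullet> p I = mxI (wt a e) I"
proof -
  have "a \<bullet> sum p B = (\<Sum>I\<in>B. a \<bullet> p I)" by (simp add: inner_sum_right)
  moreover have "a \<bullet> sum p B = (\<Sum>I\<in>B. mxI (wt a e) I)" using assms(2) Pf_eq by auto
  ultimately show ?thesis using assms
    by (intro sum_eq_each) (auto intro: hull_le_mx finI)
qed

lemma Pf_mono_iff:
  "Pf e B a \<subseteq> Pf e B a' \<longleftrightarrow> (\<forall>I\<in>B. amax (wt a e) I \<subseteq> amax (wt a' e) I)"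
proof
  assume H: "\<forall>I\<in>B. amax (wt a e) I \<subseteq> amax (wt a' e) I"
  show "Pf e B a \<subseteq> Pf e B a'"
  proof
    fix x assume x: "x \<in> Pf e B a"
    then obtain p where p: "\<forall>I\<in>B. p I \<in> convex hull (e ` I)" "x = sum p B"
      unfolding Pf_def nestohedron_def by auto
    have "\<forall>I\<in>B. a \<bullet> p I = mxI (wt a e) I" using Pf_decomp p x by auto
    then have "\<forall>I\<in>B. a' \<bullet> p I = mxI (wt a' e) I"
      using hull_eq_mx p(1) H finI by blast
    then have "a' \<bullet> x = (\<Sum>I\<in>B. mxI (wt a' e) I)"
      by (simp add: p(2) inner_sum_right)
    moreover have "x \<in> nestohedron e B" using x by (simp add: Pf_def)
    ultimately show "x \<in> Pf e B a'" by (simp add: Pf_eq)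
  qed
next
  assume H: "Pf e B a \<subseteq> Pf e B a'"
  show "\<forall>I\<in>B. amax (wt a e) I \<subseteq> amax (wt a' e) I"
  proof (intro ballI subsetI)
    fix I0 j assume I0: "I0 \<in> B" and j: "j \<in> amax (wt a e) I0"
    define q where "q I = (if I = I0 then j else (SOME i. i \<in> amax (wt a e) I))" for I
    have qI: "q I \<in> amax (wt a e) I" if "I \<in> B" for I
      using amax_ne[OF that] j by (auto simp: q_def some_in_eq)
    define p where "p I = e (q I)" for I
    have pc: "\<forall>I\<in>B. p I \<in> convex hull (e ` I)"
      using qI by (auto simp: p_def amax_def intro: hull_inc)
    have "\<forall>I\<in>B. a \<bullet> p I = mxI (wt a e) I"
    proof
      fix I assume "I \<in> B"
      then have "wt a e (q I) = mxI (wt a e) I" using qI amax_mx by blast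
      then show "a \<bullet> p I = mxI (wt a e) I" by (simp add: p_def wt_def)
    qed
    then have "sum p B \<in> Pf e B a"
      using pc by (auto simp: Pf_eq nestohedron_def inner_sum_right)
    then have "sum p B \<in> Pf e B a'" using H by auto
    then have "\<forall>I\<in>B. a' \<bullet> p I = mxI (wt a' e) I" using Pf_decomp pc by blast
    then have "a' \<bullet> p I0 = mxI (wt a' e) I0" using I0 by blast
    moreover have "p I0 = e j" by (simp add: p_def q_def)
    ultimately have "wt a' e j = mxI (wt a' e) I0" by (simp add: wt_def)
    moreover have "j \<in> I0" using j by (simp add: amax_def)
    moreover have "\<forall>k\<in>I0. wt a' e k \<le> mxI (wt a' e) I0"
      using finI[OF I0] unfolding mxI_def by simp
    ultimately show "j \<in> amax (wt a' e) I0"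
      unfolding amax_def by simp
  qed
qed

lemma Pf_face:
  fixes e :: "nat \<Rightarrow> 'a::euclidean_space"
  shows "(F face_of nestohedron e B \<and> F \<noteq> {}) \<longleftrightarrow> (\<exists>a. F = Pf e B a)"
proof
  assume H: "F face_of nestohedron e B \<and> F \<noteq> {}"
  have "polyhedron (nestohedron e B)"
    using nest_polytope finB finI polytope_imp_polyhedron by blast
  then have "F exposed_face_of nestohedron e B"
    using H exposed_face_of_polyhedron by blast
  then obtain a b where ab: "nestohedron e B \<subseteq> {x. a \<bullet> x \<le> b}"
    "F = nestohedron e B \<inter> {x. a \<bullet> x = b}"
    unfolding exposed_face_of_def by blast
  then show "\<exists>a. F = Pf e B a"
    using H unfolding Pf_def by (intro exI[of _ a]) force
next
  assume "\<exists>a. F = Pf e B a"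
  then obtain a where F: "F = Pf e B a" by blast
  have cv: "convex (nestohedron e B)"
    using nest_polytope finB finI polytope_imp_convex by blast
  have "F = nestohedron e B \<inter> {x. a \<bullet> x = (\<Sum>I\<in>B. mxI (wt a e) I)}"
    using F Pf_eq by auto
  then have "F face_of nestohedron e B"
    using face_of_Int_supporting_hyperplane_le[OF cv, of a "\<Sum>I\<in>B. mxI (wt a e) I"] nest_le by auto
  moreover have "F \<noteq> {}" unfolding F Pf_eq using nest_att[of e a] by auto
  ultimately show "F face_of nestohedron e B \<and> F \<noteq> {}" by blast
qed

end

definition Tset :: "nat \<Rightarrow> nat \<Rightarrow> nat \<Rightarrow> nat set" where
  "Tset m n r = {m+r+1..m+n}"

definition Mx :: "nat \<Rightarrow> nat \<Rightarrow> (nat \<Rightarrow> real) \<Rightarrow> nat \<Rightarrow> real" where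
  "Mx m n w r = Max (w ` Tset m n r)"

definition Wkey :: "nat \<Rightarrow> nat \<Rightarrow> (nat \<Rightarrow> real) \<Rightarrow> nat + nat \<Rightarrow> real" where
  "Wkey m n w z = (case z of Inl x \<Rightarrow> w x | Inr r \<Rightarrow> Mx m n w r)"

definition WE :: "nat \<Rightarrow> nat \<Rightarrow> (nat \<Rightarrow> real) \<Rightarrow> nat \<Rightarrow> bool" where
  "WE m n w r \<longleftrightarrow> w (m+r+1) = Mx m n w r"

definition Zs :: "nat set \<Rightarrow> nat \<Rightarrow> (nat + nat) set" where
  "Zs C k = Inl ` C \<union> Inr ` {..<k}"

definition Wdle :: "nat \<Rightarrow> nat \<Rightarrow> (nat \<Rightarrow> real) \<Rightarrow> (nat \<Rightarrow> real) \<Rightarrow> bool" where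
  "Wdle m n w w' \<longleftrightarrow>
     (\<forall>z\<in>Zs {1..m} n. \<forall>z'\<in>Zs {1..m} n. Wkey m n w z' \<le> Wkey m n w z \<longrightarrow> Wkey m n w' z' \<le> Wkey m n w' z)
     \<and> (\<forall>r<n. WE m n w r \<longrightarrow> WE m n w' r)"

lemma T_fin: "finite (Tset m n r)" by (simp add: Tset_def)
lemma T_mem: "r < n \<Longrightarrow> m+r+1 \<in> Tset m n r" by (simp add: Tset_def)
lemma T_ne: "r < n \<Longrightarrow> Tset m n r \<noteq> {}" using T_mem by blast

lemma Mx_ge: "q \<in> Tset m n r \<Longrightarrow> w q \<le> Mx m n w r"
  by (simp add: Mx_def T_fin)

lemma Mx_le_iff: "r < n \<Longrightarrow> Mx m n w r \<le> c \<longleftrightarrow> (\<forall>q\<in>Tset m n r. w q \<le> c)"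
  unfolding Mx_def using T_fin T_ne by (subst Max_le_iff) auto

lemma Mx_att: "r < n \<Longrightarrow> \<exists>q\<in>Tset m n r. w q = Mx m n w r"
proof -
  assume "r < n"
  then have "Max (w ` Tset m n r) \<in> w ` Tset m n r"
    using T_fin T_ne by (intro Max_in) auto
  then show ?thesis unfolding Mx_def by auto
qed

lemma T_sub: "r \<le> r' \<Longrightarrow> Tset m n r' \<subseteq> Tset m n r" by (auto simp: Tset_def)

lemma amax_iff: "i \<in> amax w I \<longleftrightarrow> i \<in> I \<and> (\<forall>j\<in>I. w j \<le> w i)"
  by (simp add: amax_def)

lemma T_in_B: "r < n \<Longrightarrow> Tset m n r \<in> building_set m n"
  unfolding building_set_def Tset_def
  by (auto intro!: exI[of _ "Suc r"])

lemma insT_in_B: "x \<in> {1..m} \<Longrightarrow> r < n \<Longrightarrow> insert x (Tset m n r) \<in> building_set m n"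
  unfolding building_set_def Tset_def
  by (auto intro!: exI[of _ "Suc r"])

lemma pair_in_B: "x \<in> {1..m} \<Longrightarrow> y \<in> {1..m} \<Longrightarrow> {x,y} \<in> building_set m n"
  unfolding building_set_def by auto

lemma B_cases:
  assumes "I \<in> building_set m n"
  shows "I \<noteq> {} \<and> I \<subseteq> {1..m+n} \<and> (card I < 2 \<or> I \<subseteq> {1..m} \<or>
          (\<exists>r<n. I = (I \<inter> {1..m}) \<union> Tset m n r))"
proof -
  have I: "I \<noteq> {}" "I \<subseteq> {1..m+n}" using assms by (auto simp: building_set_def)
  have dec: "I = (I \<inter> {1..m}) \<union> (I \<inter> {m+1..m+n})" using I(2) by auto
  show ?thesis
  proof (cases "card I < 2")
    case False
    then have "I \<inter> {m+1..m+n} = {} \<or> (\<exists>r. 1 \<le> r \<and> r \<le> n \<and> I \<inter> {m+1..m+n} = {m+r..m+n})"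
      using assms by (auto simp: building_set_def)
    then show ?thesis
    proof
      assume "I \<inter> {m+1..m+n} = {}"
      then have "I \<subseteq> {1..m}" using dec by auto
      then show ?thesis using I by blast
    next
      assume "\<exists>r. 1 \<le> r \<and> r \<le> n \<and> I \<inter> {m+1..m+n} = {m+r..m+n}"
      then obtain r where r: "1 \<le> r" "r \<le> n" "I \<inter> {m+1..m+n} = {m+r..m+n}" by blast
      have "Tset m n (r - 1) = {m+r..m+n}" using r(1) by (simp add: Tset_def)
      then have "I = (I \<inter> {1..m}) \<union> Tset m n (r-1)" using dec r(3) by simp
      then show ?thesis using I r by (intro conjI disjI2) (auto intro!: exI[of _ "r-1"])
    qed
  qed (use I in auto)
qed

lemma fam_imp_Wdle:
  assumes H: "\<forall>I\<in>building_set m n. amax w I \<subseteq> amax w' I"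
  shows "Wdle m n w w'"
  unfolding Wdle_def
proof (intro conjI ballI impI allI)
  fix z z' assume z: "z \<in> Zs {1..m} n" and z': "z' \<in> Zs {1..m} n"
    and le: "Wkey m n w z' \<le> Wkey m n w z"
  show "Wkey m n w' z' \<le> Wkey m n w' z"
  proof (cases z)
    case (Inl x)
    then have x: "x \<in> {1..m}" using z by (auto simp: Zs_def)
    show ?thesis
    proof (cases z')
      case (Inl y)
      then have y: "y \<in> {1..m}" using z' by (auto simp: Zs_def)
      have "x \<in> amax w {x,y}" using le Inl \<open>z = Inl x\<close> by (auto simp: amax_iff Wkey_def)
      then have "x \<in> amax w' {x,y}" using H pair_in_B[OF x y] by blast
      then show ?thesis using Inl \<open>z = Inl x\<close> by (auto simp: amax_iff Wkey_def)
    next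
      case (Inr r)
      then have r: "r < n" using z' by (auto simp: Zs_def)
      have "\<forall>q\<in>Tset m n r. w q \<le> w x"
        using le Inr \<open>z = Inl x\<close> Mx_le_iff[OF r] by (auto simp: Wkey_def)
      then have "x \<in> amax w (insert x (Tset m n r))" by (auto simp: amax_iff)
      then have "x \<in> amax w' (insert x (Tset m n r))" using H insT_in_B[OF x r] by blast
      then have "\<forall>q\<in>Tset m n r. w' q \<le> w' x" by (auto simp: amax_iff)
      then show ?thesis using Inr \<open>z = Inl x\<close> Mx_le_iff[OF r] by (auto simp: Wkey_def)
    qed
  next
    case (Inr r)
    then have r: "r < n" using z by (auto simp: Zs_def)
    obtain q where q: "q \<in> Tset m n r" "w q = Mx m n w r" using Mx_att[OF r] by blast
    show ?thesis
    proof (cases z')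
      case (Inl x)
      then have x: "x \<in> {1..m}" using z' by (auto simp: Zs_def)
      have "q \<in> amax w (insert x (Tset m n r))"
        using le Inl Inr q Mx_ge by (auto simp: amax_iff Wkey_def)
      then have "q \<in> amax w' (insert x (Tset m n r))" using H insT_in_B[OF x r] by blast
      then have "w' x \<le> w' q" by (auto simp: amax_iff)
      then show ?thesis using Inl Inr q(1) Mx_ge[of q m n r w'] by (auto simp: Wkey_def)
    next
      case (Inr r')
      then have r': "r' < n" using z' by (auto simp: Zs_def)
      show ?thesis
      proof (cases "r \<le> r'")
        case True
        have "\<forall>q\<in>Tset m n r'. w' q \<le> Mx m n w' r"
          using T_sub[OF True] Mx_ge by blast
        then show ?thesis using Inr \<open>z = Inr r\<close> Mx_le_iff[OF r'] by (auto simp: Wkey_def)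
      next
        case False
        then have sub: "Tset m n r \<subseteq> Tset m n r'" using T_sub by simp
        have "Mx m n w r' \<le> Mx m n w r" using le Inr \<open>z = Inr r\<close> by (simp add: Wkey_def)
        then have "\<forall>j\<in>Tset m n r'. w j \<le> w q"
          using q(2) Mx_ge[of _ m n r' w] by force
        then have "q \<in> amax w (Tset m n r')" using sub q(1) by (auto simp: amax_iff)
        then have "q \<in> amax w' (Tset m n r')" using H T_in_B[OF r'] by blast
        then have "\<forall>j\<in>Tset m n r'. w' j \<le> w' q" by (auto simp: amax_iff)
        then have "Mx m n w' r' \<le> w' q" using Mx_le_iff[OF r'] by blast
        also have "w' q \<le> Mx m n w' r" using Mx_ge q(1) by blast
        finally show ?thesis using Inr \<open>z = Inr r\<close> by (simp add: Wkey_def)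
      qed
    qed
  qed
next
  fix r assume r: "r < n" and E: "WE m n w r"
  have "m+r+1 \<in> amax w (Tset m n r)" using E T_mem[OF r] Mx_ge
    by (auto simp: amax_iff WE_def)
  then have "m+r+1 \<in> amax w' (Tset m n r)" using H T_in_B[OF r] by blast
  then have "Mx m n w' r \<le> w' (m+r+1)" using Mx_le_iff[OF r] by (auto simp: amax_iff)
  moreover have "w' (m+r+1) \<le> Mx m n w' r" using Mx_ge T_mem[OF r] by blast
  ultimately show "WE m n w' r" by (simp add: WE_def)
qed

lemma Wdle_imp_fam:
  assumes W: "Wdle m n w w'"
  shows "\<forall>I\<in>building_set m n. amax w I \<subseteq> amax w' I"
proof (intro ballI subsetI)
  fix I i assume IB: "I \<in> building_set m n" and i: "i \<in> amax w I"
  have W1: "\<forall>z\<in>Zs {1..m} n. \<forall>z'\<in>Zs {1..m} n. Wkey m n w z' \<le> Wkey m n w z \<longrightarrow> Wkey m n w' z' \<le> Wkey m n w' z"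
    using W unfolding Wdle_def by blast
  have C1: "\<And>x y. x \<in> {1..m} \<Longrightarrow> y \<in> {1..m} \<Longrightarrow> w y \<le> w x \<Longrightarrow> w' y \<le> w' x"
  proof -
    fix x y assume "x \<in> {1..m}" "y \<in> {1..m}" "w y \<le> w x"
    then show "w' y \<le> w' x" using W1[rule_format, of "Inl x" "Inl y"] by (simp add: Zs_def Wkey_def)
  qed
  have C2: "\<And>x r. x \<in> {1..m} \<Longrightarrow> r < n \<Longrightarrow> Mx m n w r \<le> w x \<Longrightarrow> Mx m n w' r \<le> w' x"
  proof -
    fix x r assume "x \<in> {1..m}" "r < n" "Mx m n w r \<le> w x"
    then show "Mx m n w' r \<le> w' x" using W1[rule_format, of "Inl x" "Inr r"] by (simp add: Zs_def Wkey_def)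
  qed
  have C3: "\<And>x r. x \<in> {1..m} \<Longrightarrow> r < n \<Longrightarrow> w x \<le> Mx m n w r \<Longrightarrow> w' x \<le> Mx m n w' r"
  proof -
    fix x r assume "x \<in> {1..m}" "r < n" "w x \<le> Mx m n w r"
    then show "w' x \<le> Mx m n w' r" using W1[rule_format, of "Inr r" "Inl x"] by (simp add: Zs_def Wkey_def)
  qed
  have C4: "\<And>r r'. r < n \<Longrightarrow> r' < n \<Longrightarrow> Mx m n w r' \<le> Mx m n w r \<Longrightarrow> Mx m n w' r' \<le> Mx m n w' r"
  proof -
    fix r r' assume "r < n" "r' < n" "Mx m n w r' \<le> Mx m n w r"
    then show "Mx m n w' r' \<le> Mx m n w' r" using W1[rule_format, of "Inr r" "Inr r'"] by (simp add: Zs_def Wkey_def)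
  qed
  have C5: "\<And>r. r < n \<Longrightarrow> WE m n w r \<Longrightarrow> WE m n w' r"
    using W unfolding Wdle_def by blast
  have iI: "i \<in> I" and imax: "\<forall>j\<in>I. w j \<le> w i" using i by (auto simp: amax_iff)
  have BC: "I \<noteq> {} \<and> I \<subseteq> {1..m+n} \<and> (card I < 2 \<or> I \<subseteq> {1..m} \<or>
          (\<exists>r<n. I = (I \<inter> {1..m}) \<union> Tset m n r))"
    using B_cases[OF IB] .
  have finI: "finite I" using BC finite_subset by blast
  consider "card I < 2" | "I \<subseteq> {1..m}" | "\<exists>r<n. I = (I \<inter> {1..m}) \<union> Tset m n r"
    using BC by blast
  then show "i \<in> amax w' I"
  proof cases
    case 1
    have "card I \<noteq> 0" using iI finI by auto
    then have "card I = 1" using 1 by linarith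
    then obtain a where "I = {a}" by (rule card_1_singletonE)
    then have "I = {i}" using iI by auto
    then show ?thesis by (simp add: amax_iff)
  next
    case 2
    then show ?thesis unfolding amax_iff using imax iI C1 by (meson subsetD)
  next
    case 3
    then obtain r where r: "r < n" and Ieq: "I = (I \<inter> {1..m}) \<union> Tset m n r" by blast
    show ?thesis
    proof (cases "i \<in> {1..m}")
      case True
      have "\<forall>q\<in>Tset m n r. w q \<le> w i" using imax Ieq by blast
      then have "Mx m n w r \<le> w i" using Mx_le_iff[OF r] by blast
      then have "Mx m n w' r \<le> w' i" using C2 True r by blast
      then have "\<forall>q\<in>Tset m n r. w' q \<le> w' i" using Mx_le_iff[OF r] by blast
      moreover have "\<forall>j\<in>I \<inter> {1..m}. w' j \<le> w' i" using C1 True imax by blast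
      ultimately show ?thesis using Ieq iI unfolding amax_iff by (metis Un_iff)
    next
      case False
      then have iT: "i \<in> Tset m n r" using Ieq iI by blast
      then have ib: "m+r+1 \<le> i" "i \<le> m+n" by (auto simp: Tset_def)
      define q where "q = i - m - 1"
      have q: "i = m+q+1" "r \<le> q" "q < n" using ib r unfolding q_def by linarith+
      have iTq: "i \<in> Tset m n q" using q by (simp add: Tset_def)
      have a1: "Mx m n w r \<le> w i" using imax Ieq Mx_le_iff[OF r] by blast
      have a2: "w i \<le> Mx m n w q" using Mx_ge iTq by blast
      have a3: "Mx m n w q \<le> Mx m n w r" using Mx_le_iff[OF q(3)] Mx_ge T_sub[OF q(2)] by blast
      have E: "WE m n w q" using a1 a2 a3 q(1) by (simp add: WE_def)
      then have E': "w' i = Mx m n w' q" using C5 q by (simp add: WE_def)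
      have "Mx m n w' r \<le> Mx m n w' q" using C4[OF q(3) r] a1 a2 a3 by simp
      then have t1: "\<forall>j\<in>Tset m n r. w' j \<le> w' i" using E' Mx_le_iff[OF r] by auto
      have t2: "\<forall>j\<in>I \<inter> {1..m}. w' j \<le> w' i"
      proof
        fix j assume j: "j \<in> I \<inter> {1..m}"
        then have "w j \<le> Mx m n w q" using imax a2 by force
        then have "w' j \<le> Mx m n w' q" using C3 j q(3) by blast
        then show "w' j \<le> w' i" using E' by simp
      qed
      show ?thesis using t1 t2 Ieq iI unfolding amax_iff by (metis Un_iff)
    qed
  qed
qed

lemma fam_iff_Wdle: "(\<forall>I\<in>building_set m n. amax w I \<subseteq> amax w' I) \<longleftrightarrow> Wdle m n w w'"
  using fam_imp_Wdle Wdle_imp_fam by blast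

fun endc :: "nat list \<Rightarrow> nat \<Rightarrow> bool" where
  "endc [] r = False"
| "endc (a#s) r = (if r < a then r = a - 1 else endc s (r - a))"

fun lev :: "shade \<Rightarrow> nat + nat \<Rightarrow> nat" where
  "lev [] z = 0"
| "lev ((s,c)#S) z = (case z of Inl x \<Rightarrow> if x \<in> c then 0 else Suc (lev S z)
     | Inr r \<Rightarrow> if r < sum_list s then 0 else Suc (lev S (Inr (r - sum_list s))))"

fun ends :: "shade \<Rightarrow> nat \<Rightarrow> bool" where
  "ends [] r = False"
| "ends ((s,c)#S) r = (if r < sum_list s then endc s r else ends S (r - sum_list s))"

fun vsh :: "nat set \<Rightarrow> nat \<Rightarrow> shade \<Rightarrow> bool" where
  "vsh C k [] = (C = {} \<and> k = 0)"
| "vsh C k ((s,c)#S) = ((\<forall>a\<in>set s. 0<a) \<and> (s \<noteq> [] \<or> c \<noteq> {}) \<and> c \<subseteq> C \<and> sum_list s \<le> k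
      \<and> vsh (C - c) (k - sum_list s) S)"

section \<open>Compositions\<close>

lemma endc_append:
  "endc (s1 @ s2) r = (if r < sum_list s1 then endc s1 r else endc s2 (r - sum_list s1))"
  by (induction s1 arbitrary: r) auto

lemma endc_last: "\<forall>a\<in>set s. 0<a \<Longrightarrow> s \<noteq> [] \<Longrightarrow> endc s (sum_list s - 1)"
proof (induction s)
  case (Cons a s)
  then show ?case by (cases "s = []") (auto simp: sum_list_nonneg_eq_0_iff)
qed simp

lemma endc_lt: "endc s r \<Longrightarrow> r < sum_list s"
proof (induction s arbitrary: r)
  case (Cons a s)
  show ?case
  proof (cases "r < a")
    case False
    then have "r - a < sum_list s" using Cons by auto
    then show ?thesis by simp
  qed simp
qed simp

lemma endc_exists: "\<forall>a\<in>set s. 0<a \<Longrightarrow> r < sum_list s \<Longrightarrow> \<exists>q. r \<le> q \<and> q < sum_list s \<and> endc s q"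
proof (induction s arbitrary: r)
  case (Cons a s)
  show ?case
  proof (cases "r < a")
    case True
    then show ?thesis by (intro exI[of _ "a - 1"]) auto
  next
    case False
    have "r - a < sum_list s" using Cons.prems False by auto
    moreover have "\<forall>a\<in>set s. 0<a" using Cons.prems by auto
    ultimately obtain q where "r - a \<le> q" "q < sum_list s" "endc s q"
      using Cons.IH by blast
    then show ?thesis using False by (intro exI[of _ "q + a"]) auto
  qed
qed simp

lemma endc_split: "endc t r \<Longrightarrow> \<exists>t1 t2. t = t1 @ t2 \<and> sum_list t1 = Suc r \<and> t1 \<noteq> []"
proof (induction t arbitrary: r)
  case (Cons b t)
  show ?case
  proof (cases "r < b")
    case True
    then show ?thesis using Cons.prems by (intro exI[of _ "[b]"] exI[of _ t]) auto
  next
    case False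
    have "endc t (r - b)" using Cons.prems False by simp
    then obtain t1 t2 where "t = t1 @ t2" "sum_list t1 = Suc (r - b)" "t1 \<noteq> []"
      using Cons.IH by blast
    then show ?thesis using False by (intro exI[of _ "b # t1"] exI[of _ t2]) auto
  qed
qed simp

lemma comp_exists:
  "(0 < j \<longrightarrow> E (j - 1)) \<Longrightarrow> \<exists>s. (\<forall>a\<in>set s. 0<a) \<and> sum_list s = j \<and> (\<forall>r<j. endc s r \<longleftrightarrow> E r)"
proof (induction j arbitrary: E rule: less_induct)
  case (less j)
  show ?case
  proof (cases "j = 0")
    case True
    then show ?thesis by (intro exI[of _ "[]"]) auto
  next
    case False
    define q where "q = (LEAST r. r < j \<and> E r)"
    have ex: "j - 1 < j \<and> E (j - 1)" using less.prems False by auto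
    have q: "q < j" "E q" using LeastI[of "\<lambda>r. r < j \<and> E r", OF ex] by (auto simp: q_def)
    have qmin: "\<And>r. r < q \<Longrightarrow> \<not> E r"
    proof
      fix r assume r: "r < q" "E r"
      then have "r < j \<and> E r" using q(1) by simp
      then have "q \<le> r" unfolding q_def by (rule Least_le)
      then show False using r by simp
    qed
    define E' where "E' r = E (r + Suc q)" for r
    have "0 < j - Suc q \<longrightarrow> E' (j - Suc q - 1)"
    proof
      assume "0 < j - Suc q"
      then have eq: "j - Suc q - 1 + Suc q = j - 1" by simp
      show "E' (j - Suc q - 1)" unfolding E'_def eq using ex by simp
    qed
    then obtain s' where s': "\<forall>a\<in>set s'. 0<a" "sum_list s' = j - Suc q" "\<forall>r<j - Suc q. endc s' r \<longleftrightarrow> E' r"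
      using less.IH[of "j - Suc q" E'] q(1) by auto
    show ?thesis
    proof (intro exI[of _ "Suc q # s'"] conjI allI impI)
      show "\<forall>a\<in>set (Suc q # s'). 0 < a" using s' by auto
      show "sum_list (Suc q # s') = j" using s' q by auto
    next
      fix r assume r: "r < j"
      show "endc (Suc q # s') r \<longleftrightarrow> E r"
      proof (cases "r < Suc q")
        case True
        then show ?thesis using qmin q(2) by (auto simp: less_Suc_eq)
      next
        case False
        then have "r - Suc q < j - Suc q" using r by auto
        then show ?thesis using s'(3) False unfolding E'_def by auto
      qed
    qed
  qed
qed

lemma disj_cons:
  "(\<forall>i j. i < j \<and> j < length (p#S) \<longrightarrow> snd ((p#S) ! i) \<inter> snd ((p#S) ! j) = {}) \<longleftrightarrow>
   (snd p \<inter> (\<Union>(s, c) \<in> set S. c) = {}) \<and>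
   (\<forall>i j. i < j \<and> j < length S \<longrightarrow> snd (S ! i) \<inter> snd (S ! j) = {})"
proof -
  have U: "(\<Union>(s, c) \<in> set S. c) = (\<Union>j<length S. snd (S ! j))"
  proof -
    have "(\<Union>(s, c) \<in> set S. c) = \<Union> (snd ` set S)" by (auto simp: case_prod_beta)
    also have "snd ` set S = (\<lambda>j. snd (S ! j)) ` {..<length S}"
      by (auto simp: in_set_conv_nth image_iff) (metis lessThan_iff snd_conv, metis nth_mem)
    finally show ?thesis by simp
  qed
  show ?thesis
  proof
    assume H: "\<forall>i j. i < j \<and> j < length (p#S) \<longrightarrow> snd ((p#S) ! i) \<inter> snd ((p#S) ! j) = {}"
    have "\<forall>j<length S. snd p \<inter> snd (S ! j) = {}"
      using H[rule_format, of 0 "Suc j" for j] by auto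
    moreover have "\<forall>i j. i < j \<and> j < length S \<longrightarrow> snd (S ! i) \<inter> snd (S ! j) = {}"
      using H[rule_format, of "Suc i" "Suc j" for i j] by auto
    ultimately show "(snd p \<inter> (\<Union>(s, c) \<in> set S. c) = {}) \<and>
      (\<forall>i j. i < j \<and> j < length S \<longrightarrow> snd (S ! i) \<inter> snd (S ! j) = {})"
      unfolding U by blast
  next
    assume H: "(snd p \<inter> (\<Union>(s, c) \<in> set S. c) = {}) \<and>
      (\<forall>i j. i < j \<and> j < length S \<longrightarrow> snd (S ! i) \<inter> snd (S ! j) = {})"
    show "\<forall>i j. i < j \<and> j < length (p#S) \<longrightarrow> snd ((p#S) ! i) \<inter> snd ((p#S) ! j) = {}"
    proof (intro allI impI)
      fix i j assume ij: "i < j \<and> j < length (p#S)"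
      then obtain j' where j': "j = Suc j'" "j' < length S" by (cases j) auto
      show "snd ((p#S) ! i) \<inter> snd ((p#S) ! j) = {}"
      proof (cases i)
        case 0
        then show ?thesis using H j' unfolding U by auto
      next
        case (Suc i')
        then show ?thesis using H j' ij by auto
      qed
    qed
  qed
qed

lemma vsh_iff:
  "vsh C k S \<longleftrightarrow>
     (\<forall>(s, c) \<in> set S. (\<forall>a \<in> set s. a > 0) \<and> (s \<noteq> [] \<or> c \<noteq> {})) \<and>
     sum_list (map (\<lambda>(s, c). sum_list s) S) = k \<and>
     (\<forall>i j. i < j \<and> j < length S \<longrightarrow> snd (S ! i) \<inter> snd (S ! j) = {}) \<and>
     (\<Union>(s, c) \<in> set S. c) = C"
proof (induction S arbitrary: C k)
  case Nil
  then show ?case by auto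
next
  case (Cons p S)
  obtain s c where p: "p = (s, c)" by (cases p)
  show ?case
    unfolding p vsh.simps Cons.IH disj_cons
    by (auto simp del: Set.Diff_eq_empty_iff)
qed

lemma is_shade_iff: "is_shade m n S \<longleftrightarrow> S \<noteq> [] \<and> vsh {1..m} n S"
  unfolding is_shade_def vsh_iff by auto

definition phi :: "nat \<Rightarrow> nat \<Rightarrow> nat" where
  "phi k i = (if i \<le> k then i else i - 1)"

lemma phi_mono: "i \<le> j \<Longrightarrow> phi k i \<le> phi k j"
  unfolding phi_def by auto

lemma lev_merge:
  "lev (xs @ [(s1 @ s2, c1 \<union> c2)] @ ys) z = phi (length xs) (lev (xs @ [(s1, c1), (s2, c2)] @ ys) z)"
proof (induction xs arbitrary: z)
  case Nil
  show ?case by (cases z) (auto simp: phi_def)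
next
  case (Cons p xs)
  obtain s c where p: "p = (s, c)" by (cases p)
  have ph: "phi (Suc k) (Suc i) = Suc (phi k i)" "phi (Suc k) 0 = 0" for k i by (auto simp: phi_def)
  show ?case
  proof (cases z)
    case (Inl x)
    then show ?thesis using Cons.IH[of z] by (simp add: p ph)
  next
    case (Inr r)
    then show ?thesis using Cons.IH[of "Inr (r - sum_list s)"] by (simp add: p ph)
  qed
qed

lemma ends_merge:
  "ends (xs @ [(s1 @ s2, c1 \<union> c2)] @ ys) r = ends (xs @ [(s1, c1), (s2, c2)] @ ys) r"
proof (induction xs arbitrary: r)
  case Nil
  show ?case by (auto simp: endc_append)
next
  case (Cons p xs)
  then show ?case by (cases p) simp
qed

lemma lev_split:
  "lev (xs @ [(us @ [a, b] @ vs, c)] @ ys) z = lev (xs @ [(us @ [a + b] @ vs, c)] @ ys) z"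
proof (induction xs arbitrary: z)
  case Nil
  show ?case by (cases z) (auto simp: add.assoc)
next
  case (Cons p xs)
  then show ?case by (cases p; cases z) (auto simp: add.assoc)
qed

lemma endc_split_step:
  assumes "0 < b" "endc (us @ [a + b] @ vs) r"
  shows "endc (us @ [a, b] @ vs) r"
  using assms by (auto simp: endc_append add.assoc split: if_splits)

lemma ends_split:
  assumes "0 < b" "ends (xs @ [(us @ [a + b] @ vs, c)] @ ys) r"
  shows "ends (xs @ [(us @ [a, b] @ vs, c)] @ ys) r"
  using assms(2)
proof (induction xs arbitrary: r)
  case Nil
  then show ?case using endc_split_step[OF assms(1)] by (auto simp: add.assoc split: if_splits)
next
  case (Cons p xs)
  then show ?case by (cases p) (auto simp: add.assoc split: if_splits)
qed

lemma step_props: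
  assumes "shade_step S' S"
  shows "(\<exists>f. mono f \<and> (\<forall>z. lev S' z = f (lev S z))) \<and> (\<forall>r. ends S r \<longrightarrow> ends S' r)"
  using assms
proof cases
  case (merge xs s1 s2 c1 c2 ys)
  then show ?thesis
    using lev_merge ends_merge by (auto intro!: exI[of _ "phi (length xs)"] monoI phi_mono)
next
  case (split a b xs us vs c ys)
  then show ?thesis
    using lev_split ends_split by (auto intro!: exI[of _ id] monoI)
qed

lemma le_props:
  assumes "shade_le T S"
  shows "(\<forall>z z'. lev S z \<le> lev S z' \<longrightarrow> lev T z \<le> lev T z') \<and> (\<forall>r. ends S r \<longrightarrow> ends T r)"
  using assms unfolding shade_le_def
proof (induction rule: rtranclp_induct)
  case base
  then show ?case by simp
next
  case (step y z)
  obtain f where f: "mono f" "\<forall>u. lev y u = f (lev z u)" and e: "\<forall>r. ends z r \<longrightarrow> ends y r"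
    using step_props[OF step.hyps(2)] by blast
  show ?case
  proof (intro conjI allI impI)
    fix u u' assume "lev z u \<le> lev z u'"
    then have "lev y u \<le> lev y u'" using f by (simp add: monoD)
    then show "lev T u \<le> lev T u'" using step.IH by blast
  next
    fix r assume "ends z r"
    then show "ends T r" using e step.IH by blast
  qed
qed

lemma step_cons: "shade_step X Y \<Longrightarrow> shade_step (p # X) (p # Y)"
proof (induction rule: shade_step.induct)
  case (merge xs s1 s2 c1 c2 ys)
  then show ?case using shade_step.merge[of "p # xs" s1 s2 c1 c2 ys] by simp
next
  case (split a b xs us vs c ys)
  then show ?case using shade_step.split[of a b "p # xs" us vs c ys] by simp
qed

lemma le_cons: "shade_le X Y \<Longrightarrow> shade_le (p # X) (p # Y)"
  unfolding shade_le_def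
  by (induction rule: rtranclp_induct) (auto intro: rtranclp.rtrancl_into_rtrancl step_cons)

lemma le_trans: "shade_le X Y \<Longrightarrow> shade_le Y Z \<Longrightarrow> shade_le X Z"
  unfolding shade_le_def by (rule rtranclp_trans)

lemma le_refl: "shade_le X X"
  unfolding shade_le_def by simp

lemma step_le: "shade_step X Y \<Longrightarrow> shade_le X Y"
  unfolding shade_le_def by simp

lemma collapse:
  assumes "\<forall>a\<in>set g. 0 < a" "g \<noteq> []"
  shows "shade_le ((us @ g @ vs, c) # X) ((us @ [sum_list g] @ vs, c) # X)"
  using assms
proof (induction g arbitrary: us)
  case (Cons a g)
  show ?case
  proof (cases "g = []")
    case True
    then show ?thesis by (simp add: le_refl)
  next
    case False
    obtain x where x: "x \<in> set g" using False by (cases g) auto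
    have "x \<le> sum_list g" using x by (rule member_le_sum_list) simp
    moreover have "0 < x" using x Cons.prems by auto
    ultimately have pos: "0 < sum_list g" by linarith
    have "shade_le (((us @ [a]) @ g @ vs, c) # X) (((us @ [a]) @ [sum_list g] @ vs, c) # X)"
    proof -
      have "\<forall>x\<in>set g. 0 < x" using Cons.prems by simp
      from Cons.IH[of "us @ [a]", OF this False] show ?thesis .
    qed
    moreover have "shade_step ([] @ [(us @ [a, sum_list g] @ vs, c)] @ X) ([] @ [(us @ [a + sum_list g] @ vs, c)] @ X)"
      using Cons.prems pos by (intro shade_step.split) auto
    ultimately show ?thesis by (auto intro: le_trans step_le)
  qed
qed simp

lemma refine:
  assumes "\<forall>a\<in>set s. 0 < a" "\<forall>a\<in>set t. 0 < a" "sum_list s = sum_list t"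
    "\<forall>r<sum_list s. endc s r \<longrightarrow> endc t r"
  shows "shade_le ((us @ t, c) # X) ((us @ s, c) # X)"
  using assms
proof (induction s arbitrary: t us)
  case Nil
  show ?case
  proof (cases t)
    case (Cons x t')
    have "x \<le> sum_list t" using Cons by (simp)
    then show ?thesis using Nil.prems Cons by simp
  qed (simp add: le_refl)
next
  case (Cons a s)
  have a: "0 < a" using Cons.prems by simp
  have e1: "endc (a # s) (a - 1)" using a by simp
  have lt: "a - 1 < sum_list (a # s)" using a by simp
  have "endc t (a - 1)" using Cons.prems(4)[rule_format, OF lt e1] .
  from endc_split[OF this] obtain t1 t2 where t0: "t = t1 @ t2" "sum_list t1 = Suc (a - 1)" "t1 \<noteq> []"
    by blast
  then have t: "t = t1 @ t2" "sum_list t1 = a" "t1 \<noteq> []" using a by auto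
  have t2p: "\<forall>a\<in>set t2. 0 < a" "\<forall>a\<in>set t1. 0 < a" using Cons.prems t by auto
  have st2: "sum_list s = sum_list t2" using Cons.prems t by simp
  have e2: "\<forall>r<sum_list s. endc s r \<longrightarrow> endc t2 r"
  proof (intro allI impI)
    fix r assume r: "r < sum_list s" "endc s r"
    then have e1: "endc (a # s) (r + a)" by simp
    have lt: "r + a < sum_list (a # s)" using r by simp
    have "endc t (r + a)" using Cons.prems(4)[rule_format, OF lt e1] .
    then show "endc t2 r" using t by (simp add: endc_append)
  qed
  have "shade_le (((us @ t1) @ t2, c) # X) (((us @ t1) @ s, c) # X)"
    using Cons.IH[of t2 "us @ t1"] Cons.prems st2 e2 t2p by simp
  moreover have "shade_le ((us @ t1 @ s, c) # X) ((us @ [a] @ s, c) # X)"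
    using collapse[of t1 us s c X] t t2p by simp
  ultimately show ?case using t by (auto intro: le_trans)
qed

definition cond :: "nat set \<Rightarrow> nat \<Rightarrow> shade \<Rightarrow> shade \<Rightarrow> bool" where
  "cond C k S T \<longleftrightarrow> (\<forall>z\<in>Zs C k. \<forall>z'\<in>Zs C k. lev S z \<le> lev S z' \<longrightarrow> lev T z \<le> lev T z')
      \<and> (\<forall>r<k. ends S r \<longrightarrow> ends T r)"

definition unsh :: "nat \<Rightarrow> nat + nat \<Rightarrow> nat + nat" where
  "unsh d z = (case z of Inl x \<Rightarrow> Inl x | Inr r \<Rightarrow> Inr (r + d))"

lemma pos_sum0: "\<forall>a\<in>set t. 0 < (a::nat) \<Longrightarrow> sum_list t = 0 \<Longrightarrow> t = []"
  by (cases t) auto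

lemma pos_sum_gt: "\<forall>a\<in>set t. 0 < (a::nat) \<Longrightarrow> t \<noteq> [] \<Longrightarrow> 0 < sum_list t"
  using pos_sum0 by blast

lemma lev_lt: "vsh C k S \<Longrightarrow> z \<in> Zs C k \<Longrightarrow> lev S z < length S"
proof (induction S arbitrary: C k z)
  case Nil
  then show ?case by (simp add: Zs_def)
next
  case (Cons p S)
  obtain s c where p: "p = (s, c)" by (cases p)
  have v: "vsh (C - c) (k - sum_list s) S" "sum_list s \<le> k" using Cons.prems(1) p by auto
  show ?case
  proof (cases z)
    case (Inl x)
    then have x: "x \<in> C" using Cons.prems(2) by (auto simp: Zs_def)
    show ?thesis
    proof (cases "x \<in> c")
      case False
      then have "Inl x \<in> Zs (C - c) (k - sum_list s)" using x by (simp add: Zs_def)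
      then have "lev S (Inl x) < length S" using Cons.IH v by blast
      then show ?thesis using Inl False p by simp
    qed (use Inl p in simp)
  next
    case (Inr r)
    then have r: "r < k" using Cons.prems(2) by (auto simp: Zs_def)
    show ?thesis
    proof (cases "r < sum_list s")
      case False
      then have "Inr (r - sum_list s) \<in> Zs (C - c) (k - sum_list s)" using r by (simp add: Zs_def)
      then have "lev S (Inr (r - sum_list s)) < length S" using Cons.IH v by blast
      then show ?thesis using Inr False p by simp
    qed (use Inr p in simp)
  qed
qed

lemma lev_unsh:
  assumes "z \<in> Zs (C - c) k'"
  shows "lev ((s, c) # S) (unsh (sum_list s) z) = Suc (lev S z)"
  using assms by (auto simp: Zs_def unsh_def)

lemma unsh_in:
  assumes "z \<in> Zs (C - c) (k - sum_list s)" "sum_list s \<le> k"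
  shows "unsh (sum_list s) z \<in> Zs C k"
  using assms by (auto simp: Zs_def unsh_def)

lemma lev_hit: "vsh C k S \<Longrightarrow> i < length S \<Longrightarrow> \<exists>z\<in>Zs C k. lev S z = i"
proof (induction S arbitrary: C k i)
  case Nil
  then show ?case by simp
next
  case (Cons p S)
  obtain s c where p: "p = (s, c)" by (cases p)
  have v: "vsh (C - c) (k - sum_list s) S" "sum_list s \<le> k" "\<forall>a\<in>set s. 0<a" "s \<noteq> [] \<or> c \<noteq> {}" "c \<subseteq> C"
    using Cons.prems(1) p by auto
  show ?case
  proof (cases i)
    case 0
    show ?thesis
    proof (cases "c = {}")
      case True
      then have "0 < sum_list s" using v pos_sum_gt by blast
      then show ?thesis using v(2) 0 p by (intro bexI[of _ "Inr 0"]) (auto simp: Zs_def)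
    next
      case False
      then obtain x where "x \<in> c" by blast
      then show ?thesis using v(5) 0 p by (intro bexI[of _ "Inl x"]) (auto simp: Zs_def)
    qed
  next
    case (Suc i')
    then have "i' < length S" using Cons.prems by simp
    then obtain z where z: "z \<in> Zs (C - c) (k - sum_list s)" "lev S z = i'"
      using Cons.IH v(1) by blast
    then show ?thesis
      using lev_unsh[OF z(1), of s S] unsh_in[OF z(1) v(2)] Suc p by metis
  qed
qed

lemma lev0_cons: "lev ((s,c)#S) z = 0 \<longleftrightarrow> (case z of Inl x \<Rightarrow> x \<in> c | Inr r \<Rightarrow> r < sum_list s)"
  by (cases z) auto

lemma le_back:
  assumes "vsh C k S" "vsh C k T" "cond C k S T"
  shows "shade_le T S"
  using assms
proof (induction "length S" arbitrary: S T C k rule: less_induct)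
  case less
  show ?case
  proof (cases S)
    case Nil
    then have Ck: "C = {}" "k = 0" using less.prems(1) by auto
    have "T = []"
    proof (cases T)
      case (Cons p T1)
      obtain t d where p: "p = (t, d)" by (cases p)
      have "\<forall>a\<in>set t. 0<a" "sum_list t = 0" "d = {}" "t \<noteq> [] \<or> d \<noteq> {}"
        using less.prems(2) Ck Cons p by auto
      then show ?thesis using pos_sum0 by blast
    qed simp
    then show ?thesis using Nil le_refl by simp
  next
    case (Cons p S1)
    obtain s c where p: "p = (s, c)" by (cases p)
    have vS: "vsh (C - c) (k - sum_list s) S1" "sum_list s \<le> k" "\<forall>a\<in>set s. 0<a" "s \<noteq> [] \<or> c \<noteq> {}" "c \<subseteq> C"
      using less.prems(1) Cons p by auto
    obtain zs where zs: "zs \<in> Zs C k" "lev S zs = 0" using lev_hit[OF less.prems(1), of 0] Cons by auto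
    obtain q T1 where T: "T = q # T1"
    proof (cases T)
      case Nil
      then show ?thesis using less.prems(2) zs(1) by (auto simp: Zs_def)
    qed
    obtain t d where q: "q = (t, d)" by (cases q)
    have vT: "vsh (C - d) (k - sum_list t) T1" "sum_list t \<le> k" "\<forall>a\<in>set t. 0<a" "t \<noteq> [] \<or> d \<noteq> {}" "d \<subseteq> C"
      using less.prems(2) T q by auto
    obtain z0 where z0: "z0 \<in> Zs C k" "lev T z0 = 0" using lev_hit[OF less.prems(2), of 0] T by auto
    have C1: "\<And>z z'. z \<in> Zs C k \<Longrightarrow> z' \<in> Zs C k \<Longrightarrow> lev S z \<le> lev S z' \<Longrightarrow> lev T z \<le> lev T z'"
      using less.prems(3) unfolding cond_def by blast
    have C2: "\<And>r. r < k \<Longrightarrow> ends S r \<Longrightarrow> ends T r"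
      using less.prems(3) unfolding cond_def by blast
    show ?thesis
    proof (cases "\<exists>z1\<in>Zs C k. lev S z1 = 1 \<and> lev T z1 = 0")
      case True
      then obtain z1 where z1: "z1 \<in> Zs C k" "lev S z1 = 1" "lev T z1 = 0" by blast
      have "1 < length S" using lev_lt[OF less.prems(1) z1(1)] z1(2) by simp
      then obtain p' S2 where S1: "S1 = p' # S2" using Cons by (cases S1) auto
      obtain s' c' where p': "p' = (s', c')" by (cases p')
      define Sm where "Sm = (s @ s', c \<union> c') # S2"
      have stp: "shade_step Sm S"
        using shade_step.merge[of "[]" s s' c c' S2] by (simp add: Sm_def Cons p S1 p')
      have levSm: "lev Sm z = lev S z - 1" for z
        using lev_merge[of "[]" s s' c c' S2 z] by (simp add: Sm_def Cons p S1 p' phi_def)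
      have endsSm: "ends Sm r = ends S r" for r
        using ends_merge[of "[]" s s' c c' S2 r] by (simp add: Sm_def Cons p S1 p')
      have eqC: "C - (c \<union> c') = C - c - c'" by auto
      have vSm: "vsh C k Sm"
        using less.prems(1) by (auto simp: Sm_def Cons p S1 p' eqC diff_diff_add)
      have cSm: "cond C k Sm T"
        unfolding cond_def
      proof (intro conjI ballI impI allI)
        fix z z' assume zz: "z \<in> Zs C k" "z' \<in> Zs C k" and le: "lev Sm z \<le> lev Sm z'"
        show "lev T z \<le> lev T z'"
        proof (cases "lev S z \<le> lev S z'")
          case True
          then show ?thesis using C1 zz by blast
        next
          case False
          then have "lev S z = 1" using le levSm by simp
          then have "lev T z \<le> lev T z1" using C1[OF zz(1) z1(1)] z1(2) by simp
          then show ?thesis using z1(3) by simp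
        qed
      next
        fix r assume "r < k" "ends Sm r"
        then show "ends T r" using C2 endsSm by simp
      qed
      have "length Sm < length S" by (simp add: Sm_def Cons S1)
      then have "shade_le T Sm" using less.hyps vSm less.prems(2) cSm by blast
      then show ?thesis using stp by (auto intro: le_trans step_le)
    next
      case False
      have L0: "lev S z = 0 \<longleftrightarrow> lev T z = 0" if z: "z \<in> Zs C k" for z
      proof
        assume "lev S z = 0"
        then have "lev T z \<le> lev T z0" using C1[OF z z0(1)] by simp
        then show "lev T z = 0" using z0 by simp
      next
        assume Tz: "lev T z = 0"
        show "lev S z = 0"
        proof (rule ccontr)
          assume "lev S z \<noteq> 0"
          moreover have "lev S z < length S" using lev_lt[OF less.prems(1) z] .
          ultimately have "1 < length S" by simp
          then obtain z1 where z1: "z1 \<in> Zs C k" "lev S z1 = 1" using lev_hit[OF less.prems(1)] by blast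
          have "lev T z1 \<le> lev T z" using C1[OF z1(1) z] z1(2) \<open>lev S z \<noteq> 0\<close> by simp
          then show False using False z1 Tz by force
        qed
      qed
      have cd: "c = d"
      proof -
        have "x \<in> c \<longleftrightarrow> x \<in> d" if x: "x \<in> C" for x
        proof -
          have "Inl x \<in> Zs C k" using x by (simp add: Zs_def)
          from L0[OF this] show ?thesis unfolding Cons p T q by (simp split: if_splits)
        qed
        then show ?thesis using vS(5) vT(5) by blast
      qed
      have rr: "r < sum_list s \<longleftrightarrow> r < sum_list t" if r: "r < k" for r
      proof -
        have "Inr r \<in> Zs C k" using r by (simp add: Zs_def)
        from L0[OF this] show ?thesis unfolding Cons p T q by (simp split: if_splits)
      qed
      have st: "sum_list s = sum_list t"
      proof (rule ccontr)
        assume ne: "sum_list s \<noteq> sum_list t"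
        show False
        proof (cases "sum_list s < sum_list t")
          case True
          then show False using rr[of "sum_list s"] vT(2) by simp
        next
          case False
          then show False using rr[of "sum_list t"] vS(2) ne by simp
        qed
      qed
      have c1: "cond (C - c) (k - sum_list s) S1 T1"
        unfolding cond_def
      proof (intro conjI ballI impI allI)
        fix z z' assume zz: "z \<in> Zs (C - c) (k - sum_list s)" "z' \<in> Zs (C - c) (k - sum_list s)"
          and le: "lev S1 z \<le> lev S1 z'"
        have u: "unsh (sum_list s) z \<in> Zs C k" "unsh (sum_list s) z' \<in> Zs C k"
          using unsh_in zz vS(2) by blast+
        have "lev S (unsh (sum_list s) z) \<le> lev S (unsh (sum_list s) z')"
          using lev_unsh[OF zz(1), of s S1] lev_unsh[OF zz(2), of s S1] le by (simp add: Cons p)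
        then have "lev T (unsh (sum_list s) z) \<le> lev T (unsh (sum_list s) z')"
          using C1 u by blast
        then show "lev T1 z \<le> lev T1 z'"
          using lev_unsh[OF zz(1), of t T1] lev_unsh[OF zz(2), of t T1] by (simp add: T q cd st)
      next
        fix r assume r: "r < k - sum_list s" "ends S1 r"
        then have "ends S (r + sum_list s)" by (simp add: Cons p)
        then have "ends T (r + sum_list s)" using C2 r by simp
        then show "ends T1 r" by (simp add: T q st)
      qed
      have "shade_le T1 S1"
        using less.hyps[of S1 "C - c" "k - sum_list s" T1] Cons vS(1) vT(1) c1 cd st by simp
      then have h1: "shade_le ((t, c) # T1) ((t, c) # S1)" by (rule le_cons)
      have ee: "\<forall>r<sum_list s. endc s r \<longrightarrow> endc t r"
      proof (intro allI impI)
        fix r assume r: "r < sum_list s" "endc s r"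
        then have "ends S r" by (simp add: Cons p)
        then have "ends T r" using C2 r vS(2) by simp
        then show "endc t r" using r st by (simp add: T q)
      qed
      have "shade_le (([] @ t, c) # S1) (([] @ s, c) # S1)"
        using refine[of s t "[]" c S1] vS(3) vT(3) st ee by simp
      then show ?thesis using h1 by (simp add: T q Cons p cd[symmetric]) (rule le_trans)
    qed
  qed
qed

lemma le_iff:
  assumes "vsh C k S" "vsh C k T"
  shows "shade_le T S \<longleftrightarrow> cond C k S T"
proof
  assume "shade_le T S"
  then show "cond C k S T" using le_props unfolding cond_def by blast
next
  assume "cond C k S T"
  then show "shade_le T S" using le_back assms by blast
qed

definition mu :: "shade \<Rightarrow> int" where
  "mu S = int (sum_list (map (\<lambda>(s,c). length s) S)) - int (length S)"

lemma step_mu: "shade_step S' S \<Longrightarrow> mu S' = mu S + 1"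
  by (induction rule: shade_step.induct) (auto simp: mu_def)

lemma le_mu: "shade_le X Y \<Longrightarrow> mu Y \<le> mu X \<and> (mu X = mu Y \<longrightarrow> X = Y)"
  unfolding shade_le_def
proof (induction rule: rtranclp_induct)
  case (step y z)
  then show ?case using step_mu[OF step.hyps(2)] by auto
qed simp

lemma le_antisym: "shade_le X Y \<Longrightarrow> shade_le Y X \<Longrightarrow> X = Y"
proof -
  assume a: "shade_le X Y" "shade_le Y X"
  have 1: "mu Y \<le> mu X \<and> (mu X = mu Y \<longrightarrow> X = Y)" using le_mu[OF a(1)] .
  have 2: "mu X \<le> mu Y" using le_mu[OF a(2)] by blast
  show "X = Y" using 1 2 by simp
qed

lemma lev_mono_pos: "r \<le> r' \<Longrightarrow> lev S (Inr r) \<le> lev S (Inr r')"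
proof (induction S arbitrary: r r')
  case (Cons p S)
  obtain s c where p: "p = (s, c)" by (cases p)
  show ?case
  proof (cases "r' < sum_list s")
    case False
    then show ?thesis using Cons.IH[of "r - sum_list s" "r' - sum_list s"] Cons.prems p by auto
  qed (use Cons.prems p in auto)
qed simp

lemma next_end:
  "vsh C k S \<Longrightarrow> r < k \<Longrightarrow> \<exists>q. r \<le> q \<and> q < k \<and> ends S q \<and> lev S (Inr q) = lev S (Inr r)"
proof (induction S arbitrary: C k r)
  case Nil
  then show ?case by simp
next
  case (Cons p S)
  obtain s c where p: "p = (s, c)" by (cases p)
  have v: "vsh (C - c) (k - sum_list s) S" "sum_list s \<le> k" "\<forall>a\<in>set s. 0<a"
    using Cons.prems(1) p by auto
  show ?case
  proof (cases "r < sum_list s")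
    case True
    then obtain q where q: "r \<le> q" "q < sum_list s" "endc s q" using endc_exists v(3) by blast
    then show ?thesis using True p v(2) by (intro exI[of _ q]) auto
  next
    case False
    then have "r - sum_list s < k - sum_list s" using Cons.prems(2) by simp
    then obtain q where q: "r - sum_list s \<le> q" "q < k - sum_list s" "ends S q"
      "lev S (Inr q) = lev S (Inr (r - sum_list s))"
      using Cons.IH v(1) by blast
    then show ?thesis using False p by (intro exI[of _ "q + sum_list s"]) auto
  qed
qed

definition wrep :: "nat \<Rightarrow> nat \<Rightarrow> (nat \<Rightarrow> real) \<Rightarrow> shade \<Rightarrow> bool" where
  "wrep m n w S \<longleftrightarrow>
     (\<forall>z\<in>Zs {1..m} n. \<forall>z'\<in>Zs {1..m} n. Wkey m n w z' \<le> Wkey m n w z \<longleftrightarrow> lev S z \<le> lev S z')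
     \<and> (\<forall>r<n. WE m n w r \<longleftrightarrow> ends S r)"

definition wof :: "nat \<Rightarrow> shade \<Rightarrow> nat \<Rightarrow> real" where
  "wof m S i = (if i \<le> m then - real (lev S (Inl i))
     else if ends S (i - m - 1) then - real (lev S (Inr (i - m - 1)))
     else - real (lev S (Inr (i - m - 1))) - 1)"

lemma wof_Mx:
  assumes "vsh {1..m} n S" "r < n"
  shows "Mx m n (wof m S) r = - real (lev S (Inr r))"
proof (rule antisym)
  show "Mx m n (wof m S) r \<le> - real (lev S (Inr r))"
    unfolding Mx_le_iff[OF assms(2)]
  proof
    fix q assume q: "q \<in> Tset m n r"
    then have "m < q" "r \<le> q - m - 1" by (auto simp: Tset_def)
    then have "lev S (Inr r) \<le> lev S (Inr (q - m - 1))" using lev_mono_pos by blast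
    then show "wof m S q \<le> - real (lev S (Inr r))" using \<open>m < q\<close> by (auto simp: wof_def)
  qed
next
  obtain q where q: "r \<le> q" "q < n" "ends S q" "lev S (Inr q) = lev S (Inr r)"
    using next_end[OF assms] by blast
  have "m + q + 1 \<in> Tset m n r" using q by (simp add: Tset_def)
  then have "wof m S (m + q + 1) \<le> Mx m n (wof m S) r" by (rule Mx_ge)
  then show "- real (lev S (Inr r)) \<le> Mx m n (wof m S) r" using q by (simp add: wof_def)
qed

lemma wof_wrep:
  assumes "vsh {1..m} n S"
  shows "wrep m n (wof m S) S"
proof -
  have K: "Wkey m n (wof m S) z = - real (lev S z)" if "z \<in> Zs {1..m} n" for z
    using that wof_Mx[OF assms] by (auto simp: Zs_def Wkey_def wof_def)
  have E: "WE m n (wof m S) r \<longleftrightarrow> ends S r" if "r < n" for r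
    using wof_Mx[OF assms that] by (simp add: WE_def wof_def)
  show ?thesis unfolding wrep_def using K E by simp
qed

lemma wrep_cong:
  assumes "\<forall>i\<in>{1..m+n}. w i = w' i" "wrep m n w S"
  shows "wrep m n w' S"
proof -
  have M: "Mx m n w r = Mx m n w' r" for r
  proof -
    have "w ` Tset m n r = w' ` Tset m n r" using assms(1) by (auto simp: Tset_def image_iff)
    then show ?thesis by (simp add: Mx_def)
  qed
  have K: "Wkey m n w z = Wkey m n w' z" if "z \<in> Zs {1..m} n" for z
    using that assms(1) M by (auto simp: Zs_def Wkey_def)
  have E: "WE m n w r = WE m n w' r" if "r < n" for r
    using that assms(1) M by (simp add: WE_def)
  show ?thesis using assms(2) K E unfolding wrep_def by simp
qed

lemma Wdle_cond:
  assumes "wrep m n w S" "wrep m n w' T"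
  shows "Wdle m n w w' \<longleftrightarrow> cond {1..m} n S T"
  using assms unfolding wrep_def Wdle_def cond_def by simp

definition shz :: "nat \<Rightarrow> nat + nat \<Rightarrow> nat + nat" where
  "shz d z = (case z of Inl x \<Rightarrow> Inl x | Inr r \<Rightarrow> Inr (r - d))"

lemma Zs_fin: "finite C \<Longrightarrow> finite (Zs C k)"
  by (simp add: Zs_def)

lemma datum_shade:
  assumes "finite C"
    "\<forall>r r'. r \<le> r' \<longrightarrow> r' < k \<longrightarrow> key (Inr r') \<le> (key (Inr r) :: real)"
    "0 < k \<longrightarrow> E (k - 1)"
    "\<forall>r. Suc r < k \<longrightarrow> key (Inr (Suc r)) < key (Inr r) \<longrightarrow> E r"
  shows "\<exists>S. vsh C k S \<and> (\<forall>z\<in>Zs C k. \<forall>z'\<in>Zs C k. key z' \<le> key z \<longleftrightarrow> lev S z \<le> lev S z')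
           \<and> (\<forall>r<k. E r \<longleftrightarrow> ends S r)"
  using assms
proof (induction "card C + k" arbitrary: C k key E rule: less_induct)
  case less
  show ?case
  proof (cases "Zs C k = {}")
    case True
    then have "C = {}" "k = 0" by (auto simp: Zs_def)
    then show ?thesis by (intro exI[of _ "[]"]) (auto simp: Zs_def)
  next
    case False
    have finZ: "finite (Zs C k)" using Zs_fin less.prems(1) by blast
    define V where "V = Max (key ` Zs C k)"
    have Vge: "\<And>z. z \<in> Zs C k \<Longrightarrow> key z \<le> V" using finZ by (simp add: V_def)
    have "V \<in> key ` Zs C k" using finZ False unfolding V_def by (intro Max_in) auto
    then obtain z0 where z0: "z0 \<in> Zs C k" "key z0 = V" by auto
    define c where "c = {x\<in>C. key (Inl x) = V}"
    define j where "j = (LEAST r. k \<le> r \<or> key (Inr r) \<noteq> V)"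
    have jk: "j \<le> k" unfolding j_def by (rule Least_le) simp
    have jin: "\<And>r. r < j \<Longrightarrow> key (Inr r) = V"
    proof -
      fix r assume "r < j"
      then have "\<not> (k \<le> r \<or> key (Inr r) \<noteq> V)" unfolding j_def by (rule not_less_Least)
      then show "key (Inr r) = V" by simp
    qed
    have jout: "\<And>r. j \<le> r \<Longrightarrow> r < k \<Longrightarrow> key (Inr r) < V"
    proof -
      fix r assume r: "j \<le> r" "r < k"
      have "k \<le> j \<or> key (Inr j) \<noteq> V" unfolding j_def by (rule LeastI[of _ k]) simp
      then have "key (Inr j) \<noteq> V" using r by simp
      moreover have "key (Inr j) \<le> V" using Vge r by (simp add: Zs_def)
      moreover have "key (Inr r) \<le> key (Inr j)" using less.prems(2) r by blast
      ultimately show "key (Inr r) < V" by simp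
    qed
    have Ej: "0 < j \<longrightarrow> E (j - 1)"
    proof
      assume j0: "0 < j"
      show "E (j - 1)"
      proof (cases "j = k")
        case True
        then show ?thesis using less.prems(3) j0 by simp
      next
        case False
        then have jk': "j < k" using jk by simp
        have "key (Inr (Suc (j - 1))) < key (Inr (j - 1))"
          using jout[of j] jin[of "j - 1"] jk' j0 by simp
        then show ?thesis using less.prems(4) j0 jk' by simp
      qed
    qed
    obtain s where s: "\<forall>a\<in>set s. 0<a" "sum_list s = j" "\<forall>r<j. endc s r \<longleftrightarrow> E r"
      using comp_exists[of j E, OF Ej] by blast
    define key' where "key' z = key (unsh j z)" for z
    define E' where "E' r = E (r + j)" for r
    have nontriv: "c \<noteq> {} \<or> 0 < j"
    proof (cases z0)
      case (Inl x)
      then have "x \<in> c" using z0 by (auto simp: c_def Zs_def)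
      then show ?thesis by blast
    next
      case (Inr r)
      then have "r < k" using z0 by (auto simp: Zs_def)
      then have "r < j" using jout z0 Inr by (meson not_le order_less_irrefl)
      then show ?thesis by simp
    qed
    have cC: "c \<subseteq> C" by (auto simp: c_def)
    have meas: "card (C - c) + (k - j) < card C + k"
    proof (cases "c = {}")
      case True
      then show ?thesis using nontriv jk by simp
    next
      case False
      then have "card (C - c) < card C" using cC less.prems(1)
        by (metis Diff_empty Diff_subset card_seteq le_neq_implies_less card_mono double_diff Diff_eq_empty_iff subset_refl)
      then show ?thesis by simp
    qed
    have p2: "\<forall>r r'. r \<le> r' \<longrightarrow> r' < k - j \<longrightarrow> key' (Inr r') \<le> key' (Inr r)"
      using less.prems(2) by (simp add: key'_def unsh_def)
    have p3: "0 < k - j \<longrightarrow> E' (k - j - 1)"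
      using less.prems(3) by (simp add: E'_def)
    have p4: "\<forall>r. Suc r < k - j \<longrightarrow> key' (Inr (Suc r)) < key' (Inr r) \<longrightarrow> E' r"
      using less.prems(4) by (simp add: key'_def E'_def unsh_def)
    obtain S' where S': "vsh (C - c) (k - j) S'"
      "\<forall>z\<in>Zs (C - c) (k - j). \<forall>z'\<in>Zs (C - c) (k - j). key' z' \<le> key' z \<longleftrightarrow> lev S' z \<le> lev S' z'"
      "\<forall>r<k - j. E' r \<longleftrightarrow> ends S' r"
      using less.hyps[OF meas _ p2 p3 p4] less.prems(1) by blast
    define S where "S = (s, c) # S'"
    have vS: "vsh C k S"
      using s nontriv cC jk S'(1) by (auto simp: S_def)
    have top: "lev S z = 0 \<longleftrightarrow> key z = V" if z: "z \<in> Zs C k" for z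
    proof (cases z)
      case (Inl x)
      then show ?thesis using z by (auto simp: S_def c_def Zs_def)
    next
      case (Inr r)
      then have "r < k" using z by (auto simp: Zs_def)
      then show ?thesis using Inr jin jout s(2) by (auto simp: S_def) (meson not_le order_less_irrefl)
    qed
    have sub: "shz j z \<in> Zs (C - c) (k - j) \<and> key' (shz j z) = key z \<and> lev S z = Suc (lev S' (shz j z))"
      if z: "z \<in> Zs C k" "key z \<noteq> V" for z
    proof (cases z)
      case (Inl x)
      then show ?thesis using z by (auto simp: S_def c_def Zs_def shz_def key'_def unsh_def)
    next
      case (Inr r)
      then have r: "r < k" using z by (auto simp: Zs_def)
      have "j \<le> r" using jin Inr z(2) by (meson not_le)
      then show ?thesis using Inr r s(2) by (auto simp: S_def Zs_def shz_def key'_def unsh_def)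
    qed
    have ord: "key z' \<le> key z \<longleftrightarrow> lev S z \<le> lev S z'" if zz: "z \<in> Zs C k" "z' \<in> Zs C k" for z z'
    proof (cases "key z = V")
      case True
      then have "lev S z = 0" using top[OF zz(1)] by simp
      then show ?thesis using True Vge[OF zz(2)] by simp
    next
      case False
      note zs = sub[OF zz(1) False]
      show ?thesis
      proof (cases "key z' = V")
        case True
        then show ?thesis using zs top[OF zz(2)] Vge[OF zz(1)] False by auto
      next
        case False
        note zs' = sub[OF zz(2) False]
        have "(key' (shz j z') \<le> key' (shz j z)) = (lev S' (shz j z) \<le> lev S' (shz j z'))"
          using S'(2) zs zs' by blast
        then show ?thesis using zs zs' by simp
      qed
    qed
    have en: "E r \<longleftrightarrow> ends S r" if r: "r < k" for r
    proof (cases "r < j")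
      case True
      then show ?thesis using s by (simp add: S_def)
    next
      case False
      then have "r - j < k - j" using r by simp
      then have "E (r - j + j) = ends S' (r - j)" using S'(3) by (simp add: E'_def)
      then show ?thesis using False s(2) by (simp add: S_def)
    qed
    show ?thesis using vS ord en by blast
  qed
qed

lemma weights_shade:
  "\<exists>S. vsh {1..m} n S \<and> wrep m n w S"
proof -
  have p2: "\<forall>r r'. r \<le> r' \<longrightarrow> r' < n \<longrightarrow> Wkey m n w (Inr r') \<le> Wkey m n w (Inr r)"
  proof (intro allI impI)
    fix r r' :: nat assume "r \<le> r'" "r' < n"
    then show "Wkey m n w (Inr r') \<le> Wkey m n w (Inr r)"
      using Mx_le_iff[of r' n m w] Mx_ge T_sub by (simp add: Wkey_def) blast
  qed
  have p3: "0 < n \<longrightarrow> WE m n w (n - 1)"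
  proof
    assume n: "0 < n"
    have "Tset m n (n - 1) = {m + n}" using n by (auto simp: Tset_def)
    then show "WE m n w (n - 1)" using n by (simp add: WE_def Mx_def)
  qed
  have p4: "\<forall>r. Suc r < n \<longrightarrow> Wkey m n w (Inr (Suc r)) < Wkey m n w (Inr r) \<longrightarrow> WE m n w r"
  proof (intro allI impI)
    fix r assume r: "Suc r < n" and lt: "Wkey m n w (Inr (Suc r)) < Wkey m n w (Inr r)"
    obtain q where q: "q \<in> Tset m n r" "w q = Mx m n w r" using Mx_att[of r n m w] r by auto
    show "WE m n w r"
    proof (cases "q = m + r + 1")
      case False
      then have "q \<in> Tset m n (Suc r)" using q(1) by (auto simp: Tset_def)
      then have "w q \<le> Mx m n w (Suc r)" by (rule Mx_ge)
      then show ?thesis using lt q by (simp add: Wkey_def)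
    qed (use q in \<open>simp add: WE_def\<close>)
  qed
  obtain S where S: "vsh {1..m} n S"
    "\<forall>z\<in>Zs {1..m} n. \<forall>z'\<in>Zs {1..m} n. Wkey m n w z' \<le> Wkey m n w z \<longleftrightarrow> lev S z \<le> lev S z'"
    "\<forall>r<n. WE m n w r \<longleftrightarrow> ends S r"
    using datum_shade[of "{1..m}" n "Wkey m n w" "WE m n w"] p2 p3 p4 by auto
  then show ?thesis unfolding wrep_def by blast
qed

lemma B_nestset: "nestset (building_set m n)"
proof
  show "finite (building_set m n)"
    by (rule finite_subset[of _ "Pow {1..m+n}"]) (auto simp: building_set_def)
next
  fix I assume "I \<in> building_set m n"
  then show "finite I" "I \<noteq> {}" by (auto simp: building_set_def intro: finite_subset)
qed

theorem proposition2p3: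
  fixes m n :: nat and idx :: "nat \<Rightarrow> 'N::finite"
  assumes "m + n \<ge> 1"
    and "bij_betw idx {1..m+n} (UNIV :: 'N set)"
  shows "\<exists>f. bij_betw f
               {F. F face_of nestohedron (\<lambda>i. axis (idx i) (1::real)) (building_set m n) \<and> F \<noteq> {}}
               (shades m n)
           \<and> (\<forall>F G. F face_of nestohedron (\<lambda>i. axis (idx i) (1::real)) (building_set m n) \<and> F \<noteq> {} \<and>
                     G face_of nestohedron (\<lambda>i. axis (idx i) (1::real)) (building_set m n) \<and> G \<noteq> {} \<longrightarrow>
                     (F \<subseteq> G \<longleftrightarrow> shade_le (f G) (f F)))"
proof -
  define e :: "nat \<Rightarrow> real^'N" where "e = (\<lambda>i. axis (idx i) (1::real))"
  define B where "B = building_set m n"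
  interpret nestset B unfolding B_def by (rule B_nestset)
  define FS where "FS = {F. F face_of nestohedron e B \<and> F \<noteq> {}}"
  have FS_iff: "F \<in> FS \<longleftrightarrow> (\<exists>a. F = Pf e B a)" for F
    unfolding FS_def mem_Collect_eq by (rule Pf_face)
  have mono_iff: "Pf e B a \<subseteq> Pf e B a' \<longleftrightarrow> Wdle m n (wt a e) (wt a' e)" for a a'
  proof -
    have "Pf e B a \<subseteq> Pf e B a' \<longleftrightarrow> (\<forall>I\<in>B. amax (wt a e) I \<subseteq> amax (wt a' e) I)"
      by (rule Pf_mono_iff)
    also have "\<dots> \<longleftrightarrow> Wdle m n (wt a e) (wt a' e)" unfolding B_def by (rule fam_iff_Wdle)
    finally show ?thesis .
  qed
  define f where "f F = (SOME S. vsh {1..m} n S \<and> (\<exists>a. F = Pf e B a \<and> wrep m n (wt a e) S))" for F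
  have fF: "vsh {1..m} n (f F) \<and> (\<exists>a. F = Pf e B a \<and> wrep m n (wt a e) (f F))" if "F \<in> FS" for F
  proof -
    have "\<exists>a. F = Pf e B a" using that by (simp only: FS_iff)
    then obtain a where a: "F = Pf e B a" ..
    obtain S where S: "vsh {1..m} n S" "wrep m n (wt a e) S" using weights_shade[of m n "wt a e"] by (elim exE conjE)
    have "\<exists>S. vsh {1..m} n S \<and> (\<exists>a. F = Pf e B a \<and> wrep m n (wt a e) S)"
      using a S by (intro exI[of _ S] conjI exI[of _ a]) simp_all
    then show ?thesis unfolding f_def by (rule someI_ex)
  qed
  have ord: "F \<subseteq> G \<longleftrightarrow> shade_le (f G) (f F)" if FG: "F \<in> FS" "G \<in> FS" for F G
  proof -
    obtain a where a: "F = Pf e B a" "wrep m n (wt a e) (f F)" using fF[OF FG(1)] by blast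
    obtain b where b: "G = Pf e B b" "wrep m n (wt b e) (f G)" using fF[OF FG(2)] by blast
    have "F \<subseteq> G \<longleftrightarrow> cond {1..m} n (f F) (f G)"
      using a b mono_iff Wdle_cond by simp
    also have "\<dots> \<longleftrightarrow> shade_le (f G) (f F)"
      using le_iff fF FG by blast
    finally show ?thesis .
  qed
  have vsh_sh: "vsh {1..m} n S \<longleftrightarrow> S \<in> shades m n" for S
  proof -
    have "vsh {1..m} n S \<Longrightarrow> S \<noteq> []" using assms(1) by (cases S) auto
    then show ?thesis unfolding shades_def using is_shade_iff by auto
  qed
  have inj: "inj_on f FS"
  proof
    fix F G assume FG: "F \<in> FS" "G \<in> FS" "f F = f G"
    then have "F \<subseteq> G" "G \<subseteq> F" using ord le_refl by metis+
    then show "F = G" by blast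
  qed
  have img: "f ` FS = shades m n"
  proof
    show "f ` FS \<subseteq> shades m n" using fF vsh_sh by blast
  next
    show "shades m n \<subseteq> f ` FS"
    proof
      fix S assume S: "S \<in> shades m n"
      then have vS: "vsh {1..m} n S" using vsh_sh by blast
      define a :: "real^'N" where "a = (\<chi> k. wof m S (inv_into {1..m+n} idx k))"
      have wa: "\<forall>i\<in>{1..m+n}. wof m S i = wt a e i"
      proof
        fix i assume i: "i \<in> {1..m+n}"
        have "inv_into {1..m+n} idx (idx i) = i"
          using assms(2) i by (simp add: bij_betw_def inv_into_f_f)
        then show "wof m S i = wt a e i" by (simp add: wt_def e_def a_def inner_axis)
      qed
      have wr: "wrep m n (wt a e) S" using wrep_cong[OF wa wof_wrep[OF vS]] .
      define F where "F = Pf e B a"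
      have F: "F \<in> FS" using FS_iff F_def by blast
      obtain a' where a': "F = Pf e B a'" "wrep m n (wt a' e) (f F)" using fF[OF F] by blast
      have "Wdle m n (wt a' e) (wt a e)" "Wdle m n (wt a e) (wt a' e)"
        using mono_iff a'(1) F_def by auto
      then have "cond {1..m} n (f F) S" "cond {1..m} n S (f F)"
        using Wdle_cond a'(2) wr by blast+
      then have "shade_le S (f F)" "shade_le (f F) S"
        using le_iff vS fF[OF F] by blast+
      then have "S = f F" using le_antisym by blast
      then show "S \<in> f ` FS" using F by blast
    qed
  qed
  show ?thesis
    unfolding e_def[symmetric] B_def[symmetric] FS_def[symmetric]
    using inj img ord unfolding bij_betw_def FS_def by (intro exI[of _ f]) blast
qed

end
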